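(* Let $\mathcal{X}=\mathbb{R}^d$ and $\mathcal{Y}=\mathbb{R}^k$ with Euclidean inner products. Let $f_W:\mathbb{R}^d\to\mathbb{R}^k$, $f_W(x)=\sigma(Wx)$ with $W\in\mathbb{R}^{k\times d}$ and $\sigma$ a $C$-Lipschitz function applied elementwise. Let $\mathcal{G}$ be a compact group with orthogonal representations $\phi$ on $\mathbb{R}^d$ and $\psi$ on $\mathbb{R}^k$, and assume $\sigma(\psi(g)v)=\psi(g)\sigma(v)$ for all $g\in\mathcal{G}$, $v\in\mathbb{R}^k$. Let $\mu$ be a $\mathcal{G}$-invariant probability measure on $\mathbb{R}^d$ with finite covariance $\Sigma=\int xx^\top d\mu(x)$ and assume $f_W\in L_2(\mathcal{X},\mathcal{Y},\mu)$. Then \[\|(\mathrm{id}-\mathcal{Q})f_W\|_\mu^2\le2C^2\|W^\perp\Sigma^{1/2}\|_F^2\le2C^2\|\Sigma^{1/2}\|_F^2\|W^\perp\|_F^2,\] where $W^\perp=W-\Psi(W)$ and $\Psi(W)=\int_\mathcal{G}\psi(g^{-1})W\phi(g)\,d\lambda(g)$.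
   Context: $\lambda$ is the Haar probability measure on $\mathcal{G}$ (compact, second countable, Hausdorff); representations are measurable. $\mathcal{G}$-invariance of $\mu$ means $\phi(g)X\sim\mu$ whenever $X\sim\mu$. $L_2(\mathcal{X},\mathcal{Y},\mu)$ is the space of classes of measurable $f$ with $\|f\|_\mu^2=\int\|f(x)\|_2^2d\mu(x)<\infty$. $\mathcal{Q}f(x)=\int_\mathcal{G}\psi(g^{-1})f(\phi(g)x)\,d\lambda(g)$. $\|\cdot\|_F$ is the Frobenius norm. *)

theory Defs
  imports "HOL-Probability.Probability" "HOL-Algebra.Group"
begin

definition compact_top_group :: "('g, 'b) monoid_scheme \<Rightarrow> 'g topology \<Rightarrow> bool" where
  "compact_top_group G T \<longleftrightarrow>
     group G \<and> topspace T = carrier G \<and> compact_space T \<and> Hausdorff_space T \<and>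
     second_countable T \<and>
     continuous_map (prod_topology T T) T (\<lambda>p. fst p \<otimes>\<^bsub>G\<^esub> snd p) \<and>
     continuous_map T T (\<lambda>g. inv\<^bsub>G\<^esub> g)"

definition haar_prob :: "('g, 'b) monoid_scheme \<Rightarrow> 'g topology \<Rightarrow> 'g measure \<Rightarrow> bool" where
  "haar_prob G T lam \<longleftrightarrow>
     prob_space lam \<and> space lam = carrier G \<and>
     sets lam = sigma_sets (topspace T) {U. openin T U} \<and>
     (\<forall>g\<in>carrier G. \<forall>A\<in>sets lam. emeasure lam ((\<lambda>h. g \<otimes>\<^bsub>G\<^esub> h) ` A) = emeasure lam A)"

definition orth_rep :: "('g, 'b) monoid_scheme \<Rightarrow> 'g measure \<Rightarrow> ('g \<Rightarrow> real^'n^'n) \<Rightarrow> bool" where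
  "orth_rep G lam rho \<longleftrightarrow>
     rho \<in> borel_measurable lam \<and>
     (\<forall>g\<in>carrier G. orthogonal_matrix (rho g)) \<and>
     rho \<one>\<^bsub>G\<^esub> = mat 1 \<and>
     (\<forall>g\<in>carrier G. \<forall>h\<in>carrier G. rho (g \<otimes>\<^bsub>G\<^esub> h) = rho g ** rho h)"

definition elementwise :: "(real \<Rightarrow> real) \<Rightarrow> real^'k \<Rightarrow> real^'k" where
  "elementwise s v = (\<chi> i. s (v $ i))"

definition frob_norm :: "real^'n^'m \<Rightarrow> real" where
  "frob_norm A = sqrt (\<Sum>i\<in>UNIV. \<Sum>j\<in>UNIV. (A $ i $ j)^2)"

definition psd_sqrt :: "real^'n^'n \<Rightarrow> real^'n^'n" where
  "psd_sqrt A = (THE S. transpose S = S \<and> (\<forall>x. 0 \<le> x \<bullet> (S *v x)) \<and> S ** S = A)"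

definition second_moment :: "(real^'d) measure \<Rightarrow> real^'d^'d" where
  "second_moment mu = (\<chi> i j. integral\<^sup>L mu (\<lambda>x. x $ i * x $ j))"

definition Qop :: "('g, 'b) monoid_scheme \<Rightarrow> 'g measure \<Rightarrow> ('g \<Rightarrow> real^'d^'d) \<Rightarrow> ('g \<Rightarrow> real^'k^'k)
    \<Rightarrow> (real^'d \<Rightarrow> real^'k) \<Rightarrow> real^'d \<Rightarrow> real^'k" where
  "Qop G lam phi psi f x = integral\<^sup>L lam (\<lambda>g. psi (inv\<^bsub>G\<^esub> g) *v f (phi g *v x))"

definition Psi_op :: "('g, 'b) monoid_scheme \<Rightarrow> 'g measure \<Rightarrow> ('g \<Rightarrow> real^'d^'d) \<Rightarrow> ('g \<Rightarrow> real^'k^'k)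
    \<Rightarrow> real^'d^'k \<Rightarrow> real^'d^'k" where
  "Psi_op G lam phi psi W = integral\<^sup>L lam (\<lambda>g. psi (inv\<^bsub>G\<^esub> g) ** W ** phi g)"

end

theory Submission
  imports Defs
begin

locale haar_setting =
  fixes G :: "('g, 'b) monoid_scheme" and T :: "'g topology" and lam :: "'g measure"
  assumes grp: "compact_top_group G T" and haar: "haar_prob G T lam"
begin

lemma group: "group G" using grp by (simp add: compact_top_group_def)
lemma space_lam: "space lam = carrier G" using haar by (simp add: haar_prob_def)
lemma top_car: "topspace T = carrier G" using grp by (simp add: compact_top_group_def)
lemma sets_lam: "sets lam = sigma_sets (carrier G) {U. openin T U}"
  using haar top_car by (simp add: haar_prob_def)
lemma prob: "prob_space lam" using haar by (simp add: haar_prob_def)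
lemma left_inv_meas: "g \<in> carrier G \<Longrightarrow> A \<in> sets lam \<Longrightarrow>
   emeasure lam ((\<lambda>h. g \<otimes>\<^bsub>G\<^esub> h) ` A) = emeasure lam A"
  using haar by (simp add: haar_prob_def)

lemma cont_meas:
  assumes "continuous_map T T f"
  shows "f \<in> measurable lam lam"
proof (rule measurable_sigma_sets[OF sets_lam])
  show "{U. openin T U} \<subseteq> Pow (carrier G)" using top_car openin_subset by auto
  show "f \<in> space lam \<rightarrow> carrier G" using assms space_lam top_car
    by (auto simp: continuous_map_def)
  fix U assume "U \<in> {U. openin T U}"
  then have "openin T {x \<in> topspace T. f x \<in> U}"
    using assms openin_continuous_map_preimage by blast
  moreover have "{x \<in> topspace T. f x \<in> U} = f -` U \<inter> space lam"
    using space_lam top_car by auto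
  ultimately show "f -` U \<inter> space lam \<in> sets lam"
    unfolding sets_lam using top_car by (auto intro: sigma_sets.Basic)
qed

lemma mult_cont: "continuous_map (prod_topology T T) T (\<lambda>p. fst p \<otimes>\<^bsub>G\<^esub> snd p)"
  using grp by (simp add: compact_top_group_def)
lemma inv_cont: "continuous_map T T (\<lambda>g. inv\<^bsub>G\<^esub> g)"
  using grp by (simp add: compact_top_group_def)

lemma inv_meas: "(\<lambda>g. inv\<^bsub>G\<^esub> g) \<in> measurable lam lam"
  by (rule cont_meas[OF inv_cont])

lemma mult_meas: "(\<lambda>p. fst p \<otimes>\<^bsub>G\<^esub> snd p) \<in> measurable (lam \<Otimes>\<^sub>M lam) lam"
proof -
  obtain B where B: "countable B" "\<forall>V\<in>B. openin T V"
    "\<forall>U x. openin T U \<and> x \<in> U \<longrightarrow> (\<exists>V\<in>B. x \<in> V \<and> V \<subseteq> U)"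
  proof -
    have "second_countable T" using grp by (simp add: compact_top_group_def)
    then show ?thesis using that unfolding second_countable_def by blast
  qed
  have Bsets: "V \<in> sets lam" if "V \<in> B" for V
    using B(2) that unfolding sets_lam by (auto intro: sigma_sets.Basic)
  show ?thesis
  proof (rule measurable_sigma_sets[OF sets_lam])
    show "{U. openin T U} \<subseteq> Pow (carrier G)" using top_car openin_subset by auto
    show "(\<lambda>p. fst p \<otimes>\<^bsub>G\<^esub> snd p) \<in> space (lam \<Otimes>\<^sub>M lam) \<rightarrow> carrier G"
    proof
      fix p assume "p \<in> space (lam \<Otimes>\<^sub>M lam)"
      then have "fst p \<in> carrier G" "snd p \<in> carrier G" by (auto simp: space_pair_measure space_lam)
      then show "fst p \<otimes>\<^bsub>G\<^esub> snd p \<in> carrier G" by (rule monoid.m_closed[OF group.is_monoid[OF group]])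
    qed
    fix U assume "U \<in> {U. openin T U}"
    define P where "P = {x \<in> topspace (prod_topology T T). fst x \<otimes>\<^bsub>G\<^esub> snd x \<in> U}"
    have op: "openin (prod_topology T T) P"
      unfolding P_def using mult_cont openin_continuous_map_preimage \<open>U \<in> {U. openin T U}\<close> by blast
    have op2: "\<forall>x y. (x,y) \<in> P \<longrightarrow> (\<exists>U V. openin T U \<and> openin T V \<and> x \<in> U \<and> y \<in> V \<and> U \<times> V \<subseteq> P)"
      using op by (simp only: openin_prod_topology_alt)
    have Peq: "(\<lambda>p. fst p \<otimes>\<^bsub>G\<^esub> snd p) -` U \<inter> space (lam \<Otimes>\<^sub>M lam) = P"
      by (auto simp: P_def space_pair_measure space_lam top_car)
    define R where "R = (\<lambda>(a,b). a \<times> b) ` {(a,b). a \<in> B \<and> b \<in> B \<and> a \<times> b \<subseteq> P}"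
    have "P = \<Union>R"
    proof
      show "\<Union>R \<subseteq> P" unfolding R_def by blast
      show "P \<subseteq> \<Union>R"
      proof
        fix p assume "p \<in> P"
        then obtain x y where p: "p = (x,y)" "(x,y) \<in> P" by (cases p) auto
        obtain U1 V1 where UV: "openin T U1" "openin T V1" "x \<in> U1" "y \<in> V1" "U1 \<times> V1 \<subseteq> P"
          using op2[rule_format, OF p(2)] by blast
        obtain U2 where "U2 \<in> B" "x \<in> U2" "U2 \<subseteq> U1" using B(3) UV by blast
        moreover obtain V2 where "V2 \<in> B" "y \<in> V2" "V2 \<subseteq> V1" using B(3) UV by blast
        ultimately have "U2 \<times> V2 \<subseteq> P" "p \<in> U2 \<times> V2" "U2 \<in> B" "V2 \<in> B"
          using UV(5) p(1) by auto
        then have "U2 \<times> V2 \<in> R" "p \<in> U2 \<times> V2"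
          unfolding R_def by (auto intro!: image_eqI[where x="(U2,V2)"])
        then show "p \<in> \<Union>R" by blast
      qed
    qed
    moreover have "\<Union>R \<in> sets (lam \<Otimes>\<^sub>M lam)"
    proof (rule sets.countable_Union)
      have "{(a,b). a \<in> B \<and> b \<in> B \<and> a \<times> b \<subseteq> P} \<subseteq> B \<times> B" by blast
      then have "countable {(a,b). a \<in> B \<and> b \<in> B \<and> a \<times> b \<subseteq> P}"
      proof (rule countable_subset)
        show "countable (B \<times> B)" using B(1) by simp
      qed
      then show "countable R" unfolding R_def by (rule countable_image)
      show "R \<subseteq> sets (lam \<Otimes>\<^sub>M lam)"
      proof
        fix r assume "r \<in> R"
        then obtain a b where "r = a \<times> b" "a \<in> B" "b \<in> B" unfolding R_def by auto
        then show "r \<in> sets (lam \<Otimes>\<^sub>M lam)" using Bsets by (simp add: pair_measureI)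
      qed
    qed
    ultimately show "(\<lambda>p. fst p \<otimes>\<^bsub>G\<^esub> snd p) -` U \<inter> space (lam \<Otimes>\<^sub>M lam) \<in> sets (lam \<Otimes>\<^sub>M lam)"
      using Peq by simp
  qed
qed


sublocale grp: group G by (rule group)

lemma inv_car: "g \<in> carrier G \<Longrightarrow> inv\<^bsub>G\<^esub> g \<in> carrier G" by simp

lemma lmult_meas: assumes k: "k \<in> carrier G" shows "(\<lambda>g. k \<otimes>\<^bsub>G\<^esub> g) \<in> measurable lam lam"
proof -
  have "(\<lambda>g. (k, g)) \<in> measurable lam (lam \<Otimes>\<^sub>M lam)"
    by (rule measurable_Pair) (auto intro: measurable_const simp: k space_lam)
  from measurable_compose[OF this mult_meas] show ?thesis by simp
qed

lemma rmult_meas: assumes k: "k \<in> carrier G" shows "(\<lambda>g. g \<otimes>\<^bsub>G\<^esub> k) \<in> measurable lam lam"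
proof -
  have "(\<lambda>g. (g, k)) \<in> measurable lam (lam \<Otimes>\<^sub>M lam)"
    by (rule measurable_Pair) (auto intro: measurable_const simp: k space_lam)
  from measurable_compose[OF this mult_meas] show ?thesis by simp
qed

lemma left_distr: assumes k: "k \<in> carrier G" shows "distr lam lam (\<lambda>g. k \<otimes>\<^bsub>G\<^esub> g) = lam"
proof (rule measure_eqI)
  show "sets (distr lam lam (\<lambda>g. k \<otimes>\<^bsub>G\<^esub> g)) = sets lam" by simp
  fix A assume "A \<in> sets (distr lam lam (\<lambda>g. k \<otimes>\<^bsub>G\<^esub> g))"
  then have A: "A \<in> sets lam" by simp
  then have Asub: "A \<subseteq> carrier G" using sets.sets_into_space space_lam by blast
  have eq: "(\<lambda>g. k \<otimes>\<^bsub>G\<^esub> g) -` A \<inter> space lam = (\<lambda>h. inv\<^bsub>G\<^esub> k \<otimes>\<^bsub>G\<^esub> h) ` A"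
  proof
    show "(\<lambda>g. k \<otimes>\<^bsub>G\<^esub> g) -` A \<inter> space lam \<subseteq> (\<lambda>h. inv\<^bsub>G\<^esub> k \<otimes>\<^bsub>G\<^esub> h) ` A"
    proof
      fix x assume x: "x \<in> (\<lambda>g. k \<otimes>\<^bsub>G\<^esub> g) -` A \<inter> space lam"
      then have xc: "x \<in> carrier G" and kx: "k \<otimes>\<^bsub>G\<^esub> x \<in> A" using space_lam by auto
      have "x = inv\<^bsub>G\<^esub> k \<otimes>\<^bsub>G\<^esub> (k \<otimes>\<^bsub>G\<^esub> x)"
        using xc k by (simp add: grp.m_assoc[symmetric])
      then show "x \<in> (\<lambda>h. inv\<^bsub>G\<^esub> k \<otimes>\<^bsub>G\<^esub> h) ` A" using kx by blast
    qed
    show "(\<lambda>h. inv\<^bsub>G\<^esub> k \<otimes>\<^bsub>G\<^esub> h) ` A \<subseteq> (\<lambda>g. k \<otimes>\<^bsub>G\<^esub> g) -` A \<inter> space lam"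
    proof
      fix x assume "x \<in> (\<lambda>h. inv\<^bsub>G\<^esub> k \<otimes>\<^bsub>G\<^esub> h) ` A"
      then obtain a where a: "a \<in> A" "x = inv\<^bsub>G\<^esub> k \<otimes>\<^bsub>G\<^esub> a" by blast
      then have ac: "a \<in> carrier G" using Asub by blast
      have "k \<otimes>\<^bsub>G\<^esub> x = a" using a(2) ac k by (simp add: grp.m_assoc[symmetric])
      moreover have "x \<in> carrier G" using a(2) ac k by simp
      ultimately show "x \<in> (\<lambda>g. k \<otimes>\<^bsub>G\<^esub> g) -` A \<inter> space lam" using a(1) space_lam by simp
    qed
  qed
  have "emeasure (distr lam lam (\<lambda>g. k \<otimes>\<^bsub>G\<^esub> g)) A = emeasure lam ((\<lambda>g. k \<otimes>\<^bsub>G\<^esub> g) -` A \<inter> space lam)"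
    by (rule emeasure_distr[OF lmult_meas[OF k] A])
  also have "\<dots> = emeasure lam A" unfolding eq using k A by (simp add: left_inv_meas)
  finally show "emeasure (distr lam lam (\<lambda>g. k \<otimes>\<^bsub>G\<^esub> g)) A = emeasure lam A" .
qed

lemma nn_left: assumes k: "k \<in> carrier G" and F: "F \<in> borel_measurable lam"
  shows "(\<integral>\<^sup>+ g. F (k \<otimes>\<^bsub>G\<^esub> g) \<partial>lam) = (\<integral>\<^sup>+ g. F g \<partial>lam)"
proof -
  have "(\<integral>\<^sup>+ g. F g \<partial>lam) = (\<integral>\<^sup>+ g. F g \<partial>(distr lam lam (\<lambda>g. k \<otimes>\<^bsub>G\<^esub> g)))"
    by (simp add: left_distr[OF k])
  also have "\<dots> = (\<integral>\<^sup>+ g. F (k \<otimes>\<^bsub>G\<^esub> g) \<partial>lam)"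
    by (rule nn_integral_distr[OF lmult_meas[OF k]]) (simp add: F)
  finally show ?thesis by simp
qed

lemma inv_distr: "distr lam lam (\<lambda>g. inv\<^bsub>G\<^esub> g) = lam"
proof (rule measure_eqI)
  show "sets (distr lam lam (\<lambda>g. inv\<^bsub>G\<^esub> g)) = sets lam" by simp
  interpret P: pair_sigma_finite lam lam
    by (simp add: pair_sigma_finite_def prob prob_space_imp_sigma_finite)
  fix A assume "A \<in> sets (distr lam lam (\<lambda>g. inv\<^bsub>G\<^esub> g))"
  then have A: "A \<in> sets lam" by simp
  define f :: "'g \<Rightarrow> ennreal" where "f = indicator A"
  have fm: "f \<in> borel_measurable lam" using A by (simp add: f_def)
  have one: "emeasure lam (space lam) = 1" using prob by (simp add: prob_space.emeasure_space_1)
  have Fm: "(\<lambda>(g,h). f (inv\<^bsub>G\<^esub> g \<otimes>\<^bsub>G\<^esub> h)) \<in> borel_measurable (lam \<Otimes>\<^sub>M lam)"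
  proof -
    have "(\<lambda>p. (inv\<^bsub>G\<^esub> (fst p), snd p)) \<in> measurable (lam \<Otimes>\<^sub>M lam) (lam \<Otimes>\<^sub>M lam)"
      by (rule measurable_Pair) (auto intro: measurable_compose[OF measurable_fst inv_meas])
    from measurable_compose[OF this mult_meas] have "(\<lambda>p. inv\<^bsub>G\<^esub> (fst p) \<otimes>\<^bsub>G\<^esub> snd p) \<in> measurable (lam \<Otimes>\<^sub>M lam) lam"
      by simp
    from measurable_compose[OF this fm] show ?thesis unfolding case_prod_beta .
  qed
  have "emeasure lam A = (\<integral>\<^sup>+ h. f h \<partial>lam)" using A by (simp add: f_def)
  also have "\<dots> = (\<integral>\<^sup>+ g. (\<integral>\<^sup>+ h. f h \<partial>lam) \<partial>lam)" by (simp add: one)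
  also have "\<dots> = (\<integral>\<^sup>+ g. (\<integral>\<^sup>+ h. f (inv\<^bsub>G\<^esub> g \<otimes>\<^bsub>G\<^esub> h) \<partial>lam) \<partial>lam)"
  proof (rule nn_integral_cong)
    fix g assume "g \<in> space lam"
    then have "inv\<^bsub>G\<^esub> g \<in> carrier G" using space_lam by simp
    then show "(\<integral>\<^sup>+ h. f h \<partial>lam) = (\<integral>\<^sup>+ h. f (inv\<^bsub>G\<^esub> g \<otimes>\<^bsub>G\<^esub> h) \<partial>lam)"
      using nn_left fm by simp
  qed
  also have "\<dots> = (\<integral>\<^sup>+ h. (\<integral>\<^sup>+ g. f (inv\<^bsub>G\<^esub> g \<otimes>\<^bsub>G\<^esub> h) \<partial>lam) \<partial>lam)"
    using P.Fubini'[OF Fm] by simp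
  also have "\<dots> = (\<integral>\<^sup>+ h. (\<integral>\<^sup>+ g. f (inv\<^bsub>G\<^esub> g) \<partial>lam) \<partial>lam)"
  proof (rule nn_integral_cong)
    fix h assume "h \<in> space lam"
    then have hc: "h \<in> carrier G" using space_lam by simp
    have "(\<integral>\<^sup>+ g. f (inv\<^bsub>G\<^esub> g \<otimes>\<^bsub>G\<^esub> h) \<partial>lam) = (\<integral>\<^sup>+ g. f (inv\<^bsub>G\<^esub> (inv\<^bsub>G\<^esub> h \<otimes>\<^bsub>G\<^esub> g)) \<partial>lam)"
    proof (rule nn_integral_cong)
      fix g assume "g \<in> space lam"
      then have "g \<in> carrier G" using space_lam by simp
      then show "f (inv\<^bsub>G\<^esub> g \<otimes>\<^bsub>G\<^esub> h) = f (inv\<^bsub>G\<^esub> (inv\<^bsub>G\<^esub> h \<otimes>\<^bsub>G\<^esub> g))"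
        using hc by (simp add: grp.inv_mult_group)
    qed
    also have "\<dots> = (\<integral>\<^sup>+ g. f (inv\<^bsub>G\<^esub> g) \<partial>lam)"
      using nn_left[of "inv\<^bsub>G\<^esub> h" "\<lambda>g. f (inv\<^bsub>G\<^esub> g)"] hc measurable_compose[OF inv_meas fm] by simp
    finally show "(\<integral>\<^sup>+ g. f (inv\<^bsub>G\<^esub> g \<otimes>\<^bsub>G\<^esub> h) \<partial>lam) = (\<integral>\<^sup>+ g. f (inv\<^bsub>G\<^esub> g) \<partial>lam)" .
  qed
  also have "\<dots> = (\<integral>\<^sup>+ g. f (inv\<^bsub>G\<^esub> g) \<partial>lam)" by (simp add: one)
  also have "\<dots> = (\<integral>\<^sup>+ g. f g \<partial>distr lam lam (\<lambda>g. inv\<^bsub>G\<^esub> g))"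
    by (rule nn_integral_distr[symmetric, OF inv_meas]) (simp add: fm)
  also have "\<dots> = emeasure (distr lam lam (\<lambda>g. inv\<^bsub>G\<^esub> g)) A" using A by (simp add: f_def)
  finally show "emeasure (distr lam lam (\<lambda>g. inv\<^bsub>G\<^esub> g)) A = emeasure lam A" by simp
qed


lemma right_distr: assumes k: "k \<in> carrier G" shows "distr lam lam (\<lambda>g. g \<otimes>\<^bsub>G\<^esub> k) = lam"
proof -
  have "distr lam lam (\<lambda>g. g \<otimes>\<^bsub>G\<^esub> k) =
        distr lam lam ((\<lambda>g. inv\<^bsub>G\<^esub> g) \<circ> (\<lambda>g. inv\<^bsub>G\<^esub> k \<otimes>\<^bsub>G\<^esub> g) \<circ> (\<lambda>g. inv\<^bsub>G\<^esub> g))"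
  proof (rule distr_cong)
    fix g assume "g \<in> space lam"
    then have "g \<in> carrier G" using space_lam by simp
    then show "g \<otimes>\<^bsub>G\<^esub> k = ((\<lambda>g. inv\<^bsub>G\<^esub> g) \<circ> (\<lambda>g. inv\<^bsub>G\<^esub> k \<otimes>\<^bsub>G\<^esub> g) \<circ> (\<lambda>g. inv\<^bsub>G\<^esub> g)) g"
      using k by (simp add: grp.inv_mult_group)
  qed auto
  also have "\<dots> = distr (distr (distr lam lam (\<lambda>g. inv\<^bsub>G\<^esub> g)) lam (\<lambda>g. inv\<^bsub>G\<^esub> k \<otimes>\<^bsub>G\<^esub> g)) lam (\<lambda>g. inv\<^bsub>G\<^esub> g)"
    using inv_meas lmult_meas[of "inv\<^bsub>G\<^esub> k"] k
    by (simp add: distr_distr comp_assoc)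
  also have "\<dots> = lam" using k by (simp add: inv_distr left_distr)
  finally show ?thesis .
qed

lemma integral_right:
  fixes F :: "'g \<Rightarrow> 'c::{banach, second_countable_topology}"
  assumes k: "k \<in> carrier G" and F: "F \<in> borel_measurable lam"
  shows "(\<integral> g. F (g \<otimes>\<^bsub>G\<^esub> k) \<partial>lam) = (\<integral> g. F g \<partial>lam)"
proof -
  have "(\<integral> g. F g \<partial>lam) = (\<integral> g. F g \<partial>(distr lam lam (\<lambda>g. g \<otimes>\<^bsub>G\<^esub> k)))"
    by (simp add: right_distr[OF k])
  also have "\<dots> = (\<integral> g. F (g \<otimes>\<^bsub>G\<^esub> k) \<partial>lam)"
    by (rule integral_distr[OF rmult_meas[OF k] F])
  finally show ?thesis by simp
qed

end

lemma quad0: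
  fixes a b :: real
  assumes H: "\<forall>t. a*t + b*t^2 \<le> 0"
  shows "a = 0"
proof (rule ccontr)
  assume a: "a \<noteq> 0"
  define c where "c = \<bar>b\<bar> + 1"
  have c: "c > 0" "\<bar>b\<bar> \<le> c" by (auto simp: c_def)
  define t where "t = a / (2*c)"
  have at: "a*t = a^2/(2*c)" by (simp add: t_def power2_eq_square)
  have t2: "t^2 = a^2/(4*c^2)" by (simp add: t_def power_divide power_mult_distrib)
  have "b*t^2 \<ge> -\<bar>b\<bar>*t^2" using mult_right_mono[of "-\<bar>b\<bar>" b "t^2"] by simp
  moreover have "\<bar>b\<bar>*t^2 \<le> c * t^2" using c by (simp add: mult_right_mono)
  moreover have "c * t^2 = a^2/(4*c)" using c unfolding t2 by (simp add: power2_eq_square field_simps)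
  moreover have "a^2 > 0" using a by simp
  ultimately have "a*t + b*t^2 \<ge> a^2/(2*c) - a^2/(4*c)" using at by linarith
  moreover have "a^2/(2*c) - a^2/(4*c) = a^2/(4*c)" using c by (simp add: field_simps)
  moreover have "a^2/(4*c) > 0" using c \<open>a^2 > 0\<close> by simp
  ultimately show False using H by (metis not_le order_less_le_trans)
qed

lemma sym_inner:
  fixes A :: "real^'n^'n"
  assumes "transpose A = A"
  shows "x \<bullet> (A *v y) = (A *v x) \<bullet> y"
  by (metis assms dot_lmul_matrix transpose_matrix_vector)

lemma mv_cont: "continuous_on S (\<lambda>x. (A::real^'n^'m) *v x)"
proof -
  have "bounded_linear (\<lambda>x. A *v x)" using matrix_vector_mul_linear linear_conv_bounded_linear by blast
  then show ?thesis using linear_continuous_on by blast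
qed

lemma eigen:
  fixes A :: "real^'n^'n"
  assumes sym: "transpose A = A" and V: "subspace V" and inv: "\<forall>x\<in>V. A *v x \<in> V"
    and ne: "\<exists>v\<in>V. v \<noteq> 0"
  shows "\<exists>u m. u \<in> V \<and> norm u = 1 \<and> A *v u = m *\<^sub>R u \<and> (\<forall>x\<in>V. x \<bullet> (A *v x) \<le> m * (x \<bullet> x))"
proof -
  define S where "S = sphere 0 1 \<inter> V"
  have cS: "compact S" unfolding S_def using compact_Int_closed[OF compact_sphere closed_subspace[OF V]] .
  obtain v where v: "v \<in> V" "v \<noteq> 0" using ne by blast
  have "(1 / norm v) *\<^sub>R v \<in> S" using v V by (simp add: S_def subspace_scale)
  then have neS: "S \<noteq> {}" by blast
  have cont: "continuous_on S (\<lambda>x. x \<bullet> (A *v x))"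
    by (intro continuous_intros mv_cont)
  obtain u where u: "u \<in> S" and umax: "\<forall>y\<in>S. y \<bullet> (A *v y) \<le> u \<bullet> (A *v u)"
    using continuous_attains_sup[OF cS neS cont] by blast
  define m where "m = u \<bullet> (A *v u)"
  have uV: "u \<in> V" and nu: "norm u = 1" using u by (auto simp: S_def)
  have uu: "u \<bullet> u = 1" using nu by (simp add: power2_norm_eq_inner[symmetric])
  have bound: "x \<bullet> (A *v x) \<le> m * (x \<bullet> x)" if x: "x \<in> V" for x
  proof (cases "x = 0")
    case True then show ?thesis by simp
  next
    case False
    define y where "y = (1 / norm x) *\<^sub>R x"
    have "y \<in> S" using x False V by (simp add: S_def y_def subspace_scale)
    then have "y \<bullet> (A *v y) \<le> m" using umax m_def by blast
    moreover have "y \<bullet> (A *v y) = (x \<bullet> (A *v x)) / (x \<bullet> x)"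
      using False by (simp add: y_def matrix_vector_mult_scaleR power2_norm_eq_inner[symmetric] power2_eq_square)
    moreover have "x \<bullet> x > 0" using False by simp
    ultimately show ?thesis by (simp add: divide_le_eq)
  qed
  have orth: "v \<bullet> (A *v u - m *\<^sub>R u) = 0" if v: "v \<in> V" for v
  proof -
    have "\<forall>t. 2 * (v \<bullet> (A *v u) - m * (u \<bullet> v)) * t + (v \<bullet> (A *v v) - m * (v \<bullet> v)) * t^2 \<le> 0"
    proof
      fix t :: real
      have "u + t *\<^sub>R v \<in> V" using uV v V by (simp add: subspace_add subspace_scale)
      then have B: "(u + t *\<^sub>R v) \<bullet> (A *v (u + t *\<^sub>R v)) \<le> m * ((u + t *\<^sub>R v) \<bullet> (u + t *\<^sub>R v))"
        by (rule bound)
      have s: "u \<bullet> (A *v v) = v \<bullet> (A *v u)" using sym_inner[OF sym] by (simp add: inner_commute)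
      have e1: "(u + t *\<^sub>R v) \<bullet> (A *v (u + t *\<^sub>R v)) = m + 2 * t * (v \<bullet> (A *v u)) + t^2 * (v \<bullet> (A *v v))"
        by (simp add: m_def matrix_vector_right_distrib matrix_vector_mult_scaleR inner_add_left inner_add_right s power2_eq_square algebra_simps)
      have e2: "(u + t *\<^sub>R v) \<bullet> (u + t *\<^sub>R v) = 1 + 2 * t * (u \<bullet> v) + t^2 * (v \<bullet> v)"
        by (simp add: inner_add_left inner_add_right uu inner_commute power2_eq_square algebra_simps)
      show "2 * (v \<bullet> (A *v u) - m * (u \<bullet> v)) * t + (v \<bullet> (A *v v) - m * (v \<bullet> v)) * t^2 \<le> 0"
        using B unfolding e1 e2 by (simp add: algebra_simps)
    qed
    then have "2 * (v \<bullet> (A *v u) - m * (u \<bullet> v)) = 0" by (rule quad0)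
    then show ?thesis by (simp add: inner_diff_right inner_commute)
  qed
  have wV: "A *v u - m *\<^sub>R u \<in> V" using inv uV V by (simp add: subspace_diff subspace_scale)
  have "A *v u - m *\<^sub>R u = 0" using orth[OF wV] by simp
  then have "A *v u = m *\<^sub>R u" by simp
  then show ?thesis using uV nu bound by blast
qed


definition outer :: "real^'n \<Rightarrow> real^'n^'n" where
  "outer u = (\<chi> i j. u$i * u$j)"

lemma outer_mv: "outer u *v x = (u \<bullet> x) *\<^sub>R u"
  by (simp add: outer_def vec_eq_iff matrix_vector_mult_def inner_vec_def sum_distrib_left mult_ac)

lemma transpose_outer: "transpose (outer u) = outer u"
  by (simp add: outer_def transpose_def vec_eq_iff mult.commute)

lemma transpose_add': "transpose (A + B) = transpose A + transpose (B::real^'n^'m)"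
  by (simp add: transpose_def vec_eq_iff)

lemma transpose_zero': "transpose (0::real^'n^'m) = 0"
  by (simp add: transpose_def vec_eq_iff)

lemma sqrt_exists_sub:
  fixes A :: "real^'n^'n"
  assumes sym: "transpose A = A" and psd: "\<forall>x. 0 \<le> x \<bullet> (A *v x)"
  shows "subspace V \<Longrightarrow> (\<forall>x\<in>V. A *v x \<in> V) \<Longrightarrow>
    \<exists>S. transpose S = S \<and> (\<forall>x. 0 \<le> x \<bullet> (S *v x)) \<and> (\<forall>x\<in>V. S *v (S *v x) = A *v x)
        \<and> (\<forall>x. (\<forall>y\<in>V. x \<bullet> y = 0) \<longrightarrow> S *v x = 0)"
proof (induct "dim V" arbitrary: V rule: less_induct)
  case less
  note V = less.prems(1) and inv = less.prems(2)
  show ?case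
  proof (cases "\<exists>v\<in>V. v \<noteq> 0")
    case False
    then have "\<forall>x\<in>V. x = 0" by blast
    then show ?thesis by (intro exI[of _ 0]) (auto simp: transpose_zero')
  next
    case True
    obtain u m where u: "u \<in> V" "norm u = 1" "A *v u = m *\<^sub>R u"
      using eigen[OF sym V inv True] by blast
    have uu: "u \<bullet> u = 1" using u(2) by (simp add: power2_norm_eq_inner[symmetric])
    have m0: "m \<ge> 0"
    proof -
      have "u \<bullet> (A *v u) = m" using u(3) uu by simp
      then show ?thesis using psd by metis
    qed
    define V' where "V' = V \<inter> {x. u \<bullet> x = 0}"
    have V'sub: "subspace V'" unfolding V'_def by (rule subspace_inter[OF V subspace_hyperplane])
    have inv': "\<forall>x\<in>V'. A *v x \<in> V'"
    proof
      fix x assume x: "x \<in> V'"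
      have "u \<bullet> (A *v x) = (A *v u) \<bullet> x" by (rule sym_inner[OF sym])
      also have "\<dots> = 0" using x u(3) by (simp add: V'_def)
      finally show "A *v x \<in> V'" using x inv by (simp add: V'_def)
    qed
    have "dim V' < dim V"
    proof -
      have "u \<notin> V'" using uu unfolding V'_def by auto
      then have ne: "V' \<noteq> V" using u(1) by blast
      have sub: "V' \<subseteq> V" unfolding V'_def by blast
      have "dim V' \<le> dim V" using sub by (rule dim_subset)
      moreover have "\<not> dim V \<le> dim V'" using subspace_dim_equal[OF V'sub V sub] ne by blast
      ultimately show ?thesis by linarith
    qed
    then obtain S' where S': "transpose S' = S'" "\<forall>x. 0 \<le> x \<bullet> (S' *v x)"
       "\<forall>x\<in>V'. S' *v (S' *v x) = A *v x" "\<forall>x. (\<forall>y\<in>V'. x \<bullet> y = 0) \<longrightarrow> S' *v x = 0"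
      using less.hyps[OF _ V'sub inv'] by blast
    have S'u: "S' *v u = 0" using S'(4) by (simp add: V'_def)
    define S where "S = S' + sqrt m *\<^sub>R outer u"
    have Smv: "S *v x = S' *v x + (sqrt m * (u \<bullet> x)) *\<^sub>R u" for x
      by (simp add: S_def matrix_vector_mult_add_rdistrib scaleR_matrix_vector_assoc[symmetric] outer_mv)
    have "transpose S = S" by (simp add: S_def transpose_add' transpose_scalar transpose_outer S'(1))
    moreover have "\<forall>x. 0 \<le> x \<bullet> (S *v x)"
    proof
      fix x
      have "x \<bullet> (S *v x) = x \<bullet> (S' *v x) + sqrt m * (u \<bullet> x)^2"
        by (simp add: Smv inner_add_right power2_eq_square inner_commute)
      then show "0 \<le> x \<bullet> (S *v x)" using S'(2) m0 by simp
    qed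
    moreover have "\<forall>x\<in>V. S *v (S *v x) = A *v x"
    proof
      fix x assume x: "x \<in> V"
      define x' where "x' = x - (u \<bullet> x) *\<^sub>R u"
      have x'V: "x' \<in> V'" using x u(1) V uu
        by (simp add: V'_def x'_def subspace_diff subspace_scale inner_diff_right)
      have xdec: "x = x' + (u \<bullet> x) *\<^sub>R u" by (simp add: x'_def)
      have S'x: "S' *v x = S' *v x'" 
        by (subst xdec) (simp add: matrix_vector_right_distrib matrix_vector_mult_scaleR S'u)
      have uS'x': "u \<bullet> (S' *v x') = 0"
        using sym_inner[OF S'(1), of u x'] S'u by simp
      have Su: "S *v u = sqrt m *\<^sub>R u" by (simp add: Smv S'u uu)
      have "S *v (S *v x) = S *v (S' *v x') + (sqrt m * (u \<bullet> x)) *\<^sub>R (S *v u)"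
        by (simp add: Smv[of x] S'x matrix_vector_right_distrib matrix_vector_mult_scaleR)
      also have "S *v (S' *v x') = A *v x'" using Smv[of "S' *v x'"] uS'x' S'(3) x'V by simp
      also have "(sqrt m * (u \<bullet> x)) *\<^sub>R (S *v u) = (u \<bullet> x) *\<^sub>R (A *v u)"
        using m0 by (simp add: Su u(3))
      also have "A *v x' + (u \<bullet> x) *\<^sub>R (A *v u) = A *v x"
        by (simp add: x'_def matrix_vector_mult_diff_distrib matrix_vector_mult_scaleR)
      finally show "S *v (S *v x) = A *v x" .
    qed
    moreover have "\<forall>x. (\<forall>y\<in>V. x \<bullet> y = 0) \<longrightarrow> S *v x = 0"
    proof (intro allI impI)
      fix x assume x: "\<forall>y\<in>V. x \<bullet> y = 0"
      then have "S' *v x = 0" using S'(4) by (simp add: V'_def)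
      moreover have "u \<bullet> x = 0" using x u(1) by (simp add: inner_commute)
      ultimately show "S *v x = 0" by (simp add: Smv)
    qed
    ultimately show ?thesis by blast
  qed
qed

lemma sqrt_exists:
  fixes A :: "real^'n^'n"
  assumes sym: "transpose A = A" and psd: "\<forall>x. 0 \<le> x \<bullet> (A *v x)"
  shows "\<exists>S. transpose S = S \<and> (\<forall>x. 0 \<le> x \<bullet> (S *v x)) \<and> S ** S = A"
proof -
  obtain S where S: "transpose S = S" "\<forall>x. 0 \<le> x \<bullet> (S *v x)" "\<forall>x\<in>UNIV. S *v (S *v x) = A *v x"
    using sqrt_exists_sub[OF sym psd, of UNIV] by auto
  have "S ** S = A" using S(3) by (simp add: matrix_eq matrix_vector_mul_assoc)
  then show ?thesis using S by blast
qed


lemma psd_zero: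
  fixes S :: "real^'n^'n"
  assumes sym: "transpose S = S" and psd: "\<forall>x. 0 \<le> x \<bullet> (S *v x)" and x: "x \<bullet> (S *v x) = 0"
  shows "S *v x = 0"
proof -
  have "y \<bullet> (S *v x) = 0" for y
  proof -
    have "\<forall>t. (-2 * (y \<bullet> (S *v x))) * t + (- (y \<bullet> (S *v y))) * t^2 \<le> 0"
    proof
      fix t :: real
      have "0 \<le> (x + t *\<^sub>R y) \<bullet> (S *v (x + t *\<^sub>R y))" using psd by blast
      moreover have s: "x \<bullet> (S *v y) = y \<bullet> (S *v x)" using sym_inner[OF sym] by (simp add: inner_commute)
      moreover have "(x + t *\<^sub>R y) \<bullet> (S *v (x + t *\<^sub>R y)) = 2 * t * (y \<bullet> (S *v x)) + t^2 * (y \<bullet> (S *v y))"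
        using x s by (simp add: matrix_vector_right_distrib matrix_vector_mult_scaleR inner_add_left inner_add_right power2_eq_square algebra_simps)
      ultimately show "(-2 * (y \<bullet> (S *v x))) * t + (- (y \<bullet> (S *v y))) * t^2 \<le> 0" by (simp add: algebra_simps)
    qed
    then have "-2 * (y \<bullet> (S *v x)) = 0" by (rule quad0)
    then show ?thesis by simp
  qed
  from this[of "S *v x"] show ?thesis by simp
qed

lemma exists_nonzero_vec: "\<exists>v::real^'n. v \<noteq> 0"
proof -
  have "axis undefined (1::real) \<noteq> (0::real^'n)" by (simp add: axis_eq_0_iff)
  then show ?thesis by blast
qed

lemma sqrt_uniq_half:
  fixes S T :: "real^'n^'n"
  assumes sS: "transpose S = S" and pS: "\<forall>x. 0 \<le> x \<bullet> (S *v x)"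
    and sT: "transpose T = T" and pT: "\<forall>x. 0 \<le> x \<bullet> (T *v x)"
    and eq: "S ** S = T ** T"
  shows "x \<bullet> ((S - T) *v x) \<le> 0"
proof -
  define D where "D = S - T"
  have sD: "transpose D = D" using sS sT by (simp add: D_def transpose_def vec_eq_iff)
  obtain u m where u: "norm u = 1" "D *v u = m *\<^sub>R u" and bd: "\<forall>x\<in>UNIV. x \<bullet> (D *v x) \<le> m * (x \<bullet> x)"
    using eigen[OF sD subspace_UNIV] exists_nonzero_vec by blast
  have uu: "u \<bullet> u = 1" using u(1) by (simp add: power2_norm_eq_inner[symmetric])
  have m: "m \<le> 0"
  proof (rule ccontr)
    assume "\<not> m \<le> 0"
    then have mpos: "m > 0" by simp
    have "S *v (S *v u) = T *v (T *v u)" using eq by (simp add: matrix_vector_mul_assoc)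
    moreover have "S *v (S *v u) - T *v (T *v u) = S *v (D *v u) + D *v (T *v u)"
      by (simp add: D_def matrix_vector_mult_diff_distrib matrix_vector_mult_diff_rdistrib)
    ultimately have "u \<bullet> (S *v (D *v u)) + u \<bullet> (D *v (T *v u)) = 0"
      by (metis inner_add_right inner_zero_right right_minus_eq)
    moreover have "u \<bullet> (D *v (T *v u)) = m * (u \<bullet> (T *v u))"
      using sym_inner[OF sD, of u "T *v u"] u(2) by simp
    moreover have "u \<bullet> (S *v (D *v u)) = m * (u \<bullet> (S *v u))"
      using u(2) by (simp add: matrix_vector_mult_scaleR)
    ultimately have "m * (u \<bullet> (S *v u) + u \<bullet> (T *v u)) = 0" by (simp add: algebra_simps)
    then have "u \<bullet> (S *v u) + u \<bullet> (T *v u) = 0" using mpos by simp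
    then have "u \<bullet> (S *v u) = 0" "u \<bullet> (T *v u) = 0" using pS pT by (metis add_nonneg_eq_0_iff)+
    then have "S *v u = 0" "T *v u = 0" using psd_zero sS pS sT pT by blast+
    then have "D *v u = 0" by (simp add: D_def matrix_vector_mult_diff_rdistrib)
    then have "m *\<^sub>R u = 0" using u(2) by simp
    then show False using mpos uu by simp
  qed
  have "x \<bullet> (D *v x) \<le> m * (x \<bullet> x)" using bd by blast
  also have "\<dots> \<le> 0" using m by (simp add: mult_nonpos_nonneg)
  finally show ?thesis by (simp add: D_def)
qed

lemma sqrt_unique:
  fixes S T :: "real^'n^'n"
  assumes sS: "transpose S = S" and pS: "\<forall>x. 0 \<le> x \<bullet> (S *v x)"
    and sT: "transpose T = T" and pT: "\<forall>x. 0 \<le> x \<bullet> (T *v x)"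
    and eq: "S ** S = T ** T"
  shows "S = T"
proof -
  define D where "D = S - T"
  have sD: "transpose D = D" using sS sT by (simp add: D_def transpose_def vec_eq_iff)
  have z: "x \<bullet> (D *v x) = 0" for x
  proof -
    have "x \<bullet> ((S - T) *v x) \<le> 0" by (rule sqrt_uniq_half[OF sS pS sT pT eq])
    moreover have "x \<bullet> ((T - S) *v x) \<le> 0" by (rule sqrt_uniq_half[OF sT pT sS pS eq[symmetric]])
    moreover have "(T - S) *v x = - ((S - T) *v x)" by (simp add: matrix_vector_mult_diff_rdistrib)
    ultimately show ?thesis by (simp add: D_def)
  qed
  have "D *v x = 0" for x using psd_zero[OF sD] z by simp
  then have "D = 0" by (simp add: matrix_eq)
  then show ?thesis by (simp add: D_def)
qed

lemma psd_sqrt_props: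
  fixes A :: "real^'n^'n"
  assumes sym: "transpose A = A" and psd: "\<forall>x. 0 \<le> x \<bullet> (A *v x)"
  shows "transpose (psd_sqrt A) = psd_sqrt A \<and> (\<forall>x. 0 \<le> x \<bullet> (psd_sqrt A *v x)) \<and> psd_sqrt A ** psd_sqrt A = A"
proof -
  have "\<exists>!S. transpose S = S \<and> (\<forall>x. 0 \<le> x \<bullet> (S *v x)) \<and> S ** S = A"
  proof (rule ex_ex1I)
    show "\<exists>S. transpose S = S \<and> (\<forall>x. 0 \<le> x \<bullet> (S *v x)) \<and> S ** S = A" by (rule sqrt_exists[OF sym psd])
    fix S T assume "transpose S = S \<and> (\<forall>x. 0 \<le> x \<bullet> (S *v x)) \<and> S ** S = A"
      "transpose T = T \<and> (\<forall>x. 0 \<le> x \<bullet> (T *v x)) \<and> T ** T = A"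
    then show "S = T" using sqrt_unique by metis
  qed
  then show ?thesis unfolding psd_sqrt_def by (rule theI')
qed

lemma continuous_on_mv[continuous_intros]:
  fixes P :: "'a::topological_space \<Rightarrow> real^'n^'m"
  assumes "continuous_on S P" "continuous_on S v"
  shows "continuous_on S (\<lambda>x. P x *v v x)"
  unfolding matrix_vector_mult_def by (intro continuous_intros assms)

lemma continuous_on_mm[continuous_intros]:
  fixes P :: "'a::topological_space \<Rightarrow> real^'n^'m" and Q :: "'a \<Rightarrow> real^'l^'n"
  assumes "continuous_on S P" "continuous_on S Q"
  shows "continuous_on S (\<lambda>x. P x ** Q x)"
  unfolding matrix_matrix_mult_def by (intro continuous_intros assms)

lemma orth_norm_le:
  fixes Q :: "real^'n^'n"
  assumes "orthogonal_matrix Q"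
  shows "norm Q \<le> real CARD('n)"
proof -
  have row: "norm (Q $ i) = 1" for i
  proof -
    have "(Q ** transpose Q) $ i $ i = 1" using assms by (simp add: orthogonal_matrix_def mat_def)
    then have "Q $ i \<bullet> Q $ i = 1"
      by (simp add: matrix_matrix_mult_def transpose_def inner_vec_def)
    then show ?thesis by (simp add: norm_eq_sqrt_inner)
  qed
  have "norm Q \<le> (\<Sum>i\<in>UNIV. norm (Q $ i))" unfolding norm_vec_def by (rule L2_set_le_sum) simp
  also have "\<dots> = real CARD('n)" by (simp add: row)
  finally show ?thesis .
qed

lemma orth_mv_norm:
  fixes Q :: "real^'n^'n"
  assumes "orthogonal_matrix Q"
  shows "norm (Q *v x) = norm x"
proof -
  have "(Q *v x) \<bullet> (Q *v x) = x \<bullet> x"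
    using assms dot_lmul_matrix[of "Q *v x" Q x]
    by (metis matrix_vector_mul_assoc matrix_vector_mul_lid orthogonal_matrix transpose_matrix_vector)
  then show ?thesis by (simp add: norm_eq_sqrt_inner)
qed

context haar_setting begin
sublocale P: prob_space lam by (rule prob)
end

locale prop_setting = haar_setting G T lam
  for G :: "('g, 'b) monoid_scheme" and T :: "'g topology" and lam :: "'g measure" +
  fixes phi :: "'g \<Rightarrow> real^'d^'d" and psi :: "'g \<Rightarrow> real^'k^'k"
  assumes rep_phi: "orth_rep G lam phi" and rep_psi: "orth_rep G lam psi"
begin

lemma phi_meas: "phi \<in> borel_measurable lam" using rep_phi by (simp add: orth_rep_def)
lemma psi_meas: "psi \<in> borel_measurable lam" using rep_psi by (simp add: orth_rep_def)
lemma phi_orth: "g \<in> carrier G \<Longrightarrow> orthogonal_matrix (phi g)" using rep_phi by (simp add: orth_rep_def)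
lemma psi_orth: "g \<in> carrier G \<Longrightarrow> orthogonal_matrix (psi g)" using rep_psi by (simp add: orth_rep_def)
lemma phi_mult: "g \<in> carrier G \<Longrightarrow> h \<in> carrier G \<Longrightarrow> phi (g \<otimes>\<^bsub>G\<^esub> h) = phi g ** phi h"
  using rep_phi by (simp add: orth_rep_def)
lemma psi_mult: "g \<in> carrier G \<Longrightarrow> h \<in> carrier G \<Longrightarrow> psi (g \<otimes>\<^bsub>G\<^esub> h) = psi g ** psi h"
  using rep_psi by (simp add: orth_rep_def)
lemma phi_one: "phi \<one>\<^bsub>G\<^esub> = mat 1" using rep_phi by (simp add: orth_rep_def)
lemma psi_one: "psi \<one>\<^bsub>G\<^esub> = mat 1" using rep_psi by (simp add: orth_rep_def)

lemma rep_inv_gen: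
  fixes rho :: "'g \<Rightarrow> real^'n^'n"
  assumes rep: "orth_rep G lam rho" and g: "g \<in> carrier G"
  shows "rho (inv\<^bsub>G\<^esub> g) = transpose (rho g)"
proof -
  have o: "orthogonal_matrix (rho g)" using rep g by (simp add: orth_rep_def)
  have "rho (inv\<^bsub>G\<^esub> g) ** rho g = mat 1"
    using rep g by (simp add: orth_rep_def flip: )  (metis grp.inv_closed grp.l_inv)
  then have "rho (inv\<^bsub>G\<^esub> g) = rho (inv\<^bsub>G\<^esub> g) ** (rho g ** transpose (rho g))"
    using o by (simp add: orthogonal_matrix_def)
  also have "\<dots> = (rho (inv\<^bsub>G\<^esub> g) ** rho g) ** transpose (rho g)" by (simp add: matrix_mul_assoc)
  also have "\<dots> = transpose (rho g)" using \<open>rho (inv\<^bsub>G\<^esub> g) ** rho g = mat 1\<close> by simp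
  finally show ?thesis .
qed

lemma phi_inv: "g \<in> carrier G \<Longrightarrow> phi (inv\<^bsub>G\<^esub> g) = transpose (phi g)"
  by (rule rep_inv_gen[OF rep_phi])
lemma psi_inv: "g \<in> carrier G \<Longrightarrow> psi (inv\<^bsub>G\<^esub> g) = transpose (psi g)"
  by (rule rep_inv_gen[OF rep_psi])

lemma H_meas:
  fixes H :: "real^'k^'k \<Rightarrow> real^'d^'d \<Rightarrow> 'c::{banach, second_countable_topology}"
  assumes H: "continuous_on UNIV (\<lambda>p. H (fst p) (snd p))"
  shows "(\<lambda>g. H (psi (inv\<^bsub>G\<^esub> g)) (phi g)) \<in> borel_measurable lam"
  by (rule borel_measurable_continuous_Pair[OF measurable_compose[OF inv_meas psi_meas] phi_meas H])

lemma H_int: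
  fixes H :: "real^'k^'k \<Rightarrow> real^'d^'d \<Rightarrow> 'c::{banach, second_countable_topology}"
  assumes H: "continuous_on UNIV (\<lambda>p. H (fst p) (snd p))"
  shows "integrable lam (\<lambda>g. H (psi (inv\<^bsub>G\<^esub> g)) (phi g))"
proof -
  define K where "K = cball (0::real^'k^'k) (real CARD('k)) \<times> cball (0::real^'d^'d) (real CARD('d))"
  have "compact K" unfolding K_def by (intro compact_Times compact_cball)
  then have "compact ((\<lambda>p. H (fst p) (snd p)) ` K)"
    using continuous_on_subset[OF H] by (intro compact_continuous_image) auto
  then obtain B where B: "\<forall>y\<in>(\<lambda>p. H (fst p) (snd p)) ` K. norm y \<le> B"
    using compact_imp_bounded bounded_iff by metis
  show ?thesis
  proof (rule P.integrable_const_bound[where B=B])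
    show "AE g in lam. norm (H (psi (inv\<^bsub>G\<^esub> g)) (phi g)) \<le> B"
    proof (rule AE_I2)
      fix g assume "g \<in> space lam"
      then have g: "g \<in> carrier G" using space_lam by simp
      have "(psi (inv\<^bsub>G\<^esub> g), phi g) \<in> K"
        unfolding K_def using orth_norm_le[OF psi_orth[OF inv_car[OF g]]] orth_norm_le[OF phi_orth[OF g]]
        by (simp add: dist_norm)
      then show "norm (H (psi (inv\<^bsub>G\<^esub> g)) (phi g)) \<le> B" using B by force
    qed
    show "(\<lambda>g. H (psi (inv\<^bsub>G\<^esub> g)) (phi g)) \<in> borel_measurable lam" by (rule H_meas[OF H])
  qed
qed

end

lemma C_nonneg:
  assumes lip: "\<forall>a b. \<bar>sg a - sg b\<bar> \<le> C * \<bar>a - b\<bar>"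
  shows "0 \<le> (C::real)"
proof -
  have "\<bar>sg 1 - sg 0\<bar> \<le> C * \<bar>1 - 0\<bar>" using lip by blast
  then show ?thesis by simp
qed

lemma sigma_cont:
  assumes lip: "\<forall>a b. \<bar>sg a - sg b\<bar> \<le> C * \<bar>a - b\<bar>"
  shows "continuous_on UNIV (sg :: real \<Rightarrow> real)"
proof -
  have C: "0 \<le> C" by (rule C_nonneg[OF lip])
  have "C-lipschitz_on UNIV sg"
    using lip C by (auto simp: lipschitz_on_def dist_real_def)
  then show ?thesis by (rule lipschitz_on_continuous_on)
qed

lemma continuous_on_elementwise[continuous_intros]:
  assumes "continuous_on UNIV (sg :: real \<Rightarrow> real)" "continuous_on S F"
  shows "continuous_on S (\<lambda>x. elementwise sg (F x :: real^'n))"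
  unfolding elementwise_def
  by (intro continuous_intros continuous_on_compose2[OF assms(1)] assms(2)) auto

lemma elementwise_lip:
  assumes lip: "\<forall>a b. \<bar>sg a - sg b\<bar> \<le> C * \<bar>a - b\<bar>"
  shows "norm (elementwise sg a - elementwise sg (b::real^'n)) \<le> C * norm (a - b)"
proof -
  have C: "0 \<le> C" by (rule C_nonneg[OF lip])
  have "(norm (elementwise sg a - elementwise sg b))^2 = (\<Sum>i\<in>UNIV. (sg (a$i) - sg (b$i))^2)"
    unfolding power2_norm_eq_inner by (simp add: inner_vec_def elementwise_def power2_eq_square)
  also have "\<dots> \<le> (\<Sum>i\<in>UNIV. (C * (a$i - b$i))^2)"
  proof (rule sum_mono)
    fix i
    have "\<bar>sg (a$i) - sg (b$i)\<bar> \<le> \<bar>C * (a$i - b$i)\<bar>" using lip C by (simp add: abs_mult)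
    then show "(sg (a$i) - sg (b$i))^2 \<le> (C * (a$i - b$i))^2"
      by (simp add: abs_le_square_iff)
  qed
  also have "\<dots> = (C * norm (a - b))^2"
    unfolding power_mult_distrib power2_norm_eq_inner by (simp add: inner_vec_def sum_distrib_left power2_eq_square)
  finally show ?thesis using C by (simp add: power2_le_iff_abs_le)
qed

lemma jensen_norm:
  fixes k :: "'a \<Rightarrow> 'c::{euclidean_space}"
  assumes M: "prob_space M" and ik: "integrable M k" and ik2: "integrable M (\<lambda>g. (norm (k g))^2)"
  shows "(norm (integral\<^sup>L M k))^2 \<le> integral\<^sup>L M (\<lambda>g. (norm (k g))^2)"
proof -
  interpret prob_space M by (rule M)
  define c where "c = integral\<^sup>L M k"
  have one: "measure M (space M) = 1" using M by (simp add: prob_space.prob_space)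
  have eq: "(norm (k g - c))^2 = (norm (k g))^2 - 2 * (c \<bullet> k g) + (norm c)^2" for g
    by (simp add: power2_norm_eq_inner inner_diff_left inner_diff_right inner_commute algebra_simps)
  have i1: "integrable M (\<lambda>g. c \<bullet> k g)" using ik by simp
  have "0 \<le> integral\<^sup>L M (\<lambda>g. (norm (k g - c))^2)" by (rule integral_nonneg_AE) simp
  also have "\<dots> = integral\<^sup>L M (\<lambda>g. (norm (k g))^2 - 2 * (c \<bullet> k g) + (norm c)^2)" by (simp only: eq)
  also have "\<dots> = integral\<^sup>L M (\<lambda>g. (norm (k g))^2) - 2 * (c \<bullet> c) + (norm c)^2"
  proof -
    have i2: "integrable M (\<lambda>g. (norm (k g))^2 - 2 * (c \<bullet> k g))" using ik2 i1 by simp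
    have "integral\<^sup>L M (\<lambda>g. (norm (k g))^2 - 2 * (c \<bullet> k g) + (norm c)^2)
        = integral\<^sup>L M (\<lambda>g. (norm (k g))^2 - 2 * (c \<bullet> k g)) + integral\<^sup>L M (\<lambda>g. (norm c)^2)"
      by (rule Bochner_Integration.integral_add[OF i2]) simp
    also have "integral\<^sup>L M (\<lambda>g. (norm (k g))^2 - 2 * (c \<bullet> k g)) = integral\<^sup>L M (\<lambda>g. (norm (k g))^2) - integral\<^sup>L M (\<lambda>g. 2 * (c \<bullet> k g))"
      using ik2 i1 by (intro Bochner_Integration.integral_diff) auto
    also have "integral\<^sup>L M (\<lambda>g. 2 * (c \<bullet> k g)) = 2 * (c \<bullet> c)"
      using ik by (simp add: c_def)
    also have "integral\<^sup>L M (\<lambda>g. (norm c)^2) = (norm c)^2" using one by simp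
    finally show ?thesis .
  qed
  also have "\<dots> = integral\<^sup>L M (\<lambda>g. (norm (k g))^2) - (norm c)^2"
    by (simp add: power2_norm_eq_inner)
  finally show ?thesis by (simp add: c_def)
qed

lemma norm_mv_sq:
  fixes N :: "real^'d^'k"
  shows "(norm (N *v x))^2 = (\<Sum>i\<in>UNIV. \<Sum>j\<in>UNIV. \<Sum>l\<in>UNIV. N$i$j * N$i$l * (x$j * x$l))"
  by (simp add: power2_norm_eq_inner inner_vec_def matrix_vector_mult_def sum_product mult_ac)


lemma int_dsum:
  fixes F :: "'i \<Rightarrow> 'j \<Rightarrow> 'a \<Rightarrow> real"
  assumes "\<And>a b. integrable M (F a b)"
  shows "(\<integral>x. (\<Sum>a\<in>A. \<Sum>b\<in>B. c a b * F a b x) \<partial>M) = (\<Sum>a\<in>A. \<Sum>b\<in>B. c a b * integral\<^sup>L M (F a b))"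
  using assms by (simp add: Bochner_Integration.integral_sum integrable_sum)

lemma meas_borel:
  assumes "sets mu = sets borel" "continuous_on UNIV f"
  shows "f \<in> borel_measurable mu"
  unfolding measurable_cong_sets[OF assms(1) refl] by (rule borel_measurable_continuous_onI[OF assms(2)])

lemma sm_int:
  fixes mu :: "(real^'d) measure"
  assumes sets: "sets mu = sets borel" and cov: "integrable mu (\<lambda>x. norm x ^ 2)"
  shows "integrable mu (\<lambda>x. x$i * x$j)"
proof (rule Bochner_Integration.integrable_bound[OF cov])
  show "(\<lambda>x. x$i * x$j) \<in> borel_measurable mu"
    by (rule meas_borel[OF sets]) (intro continuous_intros)
  show "AE x in mu. norm (x$i * x$j) \<le> norm (norm x ^ 2)"
  proof (rule AE_I2)
    fix x :: "real^'d"
    have "\<bar>x$i\<bar> \<le> norm x" "\<bar>x$j\<bar> \<le> norm x" by (simp_all add: component_le_norm_cart)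
    then have "\<bar>x$i\<bar> * \<bar>x$j\<bar> \<le> norm x * norm x" by (intro mult_mono) auto
    then show "norm (x$i * x$j) \<le> norm (norm x ^ 2)" by (simp add: abs_mult power2_eq_square)
  qed
qed

lemma sm_sym: "transpose (second_moment mu) = second_moment (mu :: (real^'d) measure)"
  by (simp add: second_moment_def transpose_def vec_eq_iff mult.commute)

lemma sm_quad:
  fixes mu :: "(real^'d) measure"
  assumes sets: "sets mu = sets borel" and cov: "integrable mu (\<lambda>x. norm x ^ 2)"
  shows "v \<bullet> (second_moment mu *v v) = (\<integral>x. (v \<bullet> x)^2 \<partial>mu)"
proof -
  have "(\<integral>x. (v \<bullet> x)^2 \<partial>mu) = (\<integral>x. (\<Sum>a\<in>UNIV. \<Sum>b\<in>UNIV. (v$a * v$b) * (x$a * x$b)) \<partial>mu)"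
    by (simp add: inner_vec_def power2_eq_square sum_product mult_ac)
  also have "\<dots> = (\<Sum>a\<in>UNIV. \<Sum>b\<in>UNIV. (v$a * v$b) * (\<integral>x. x$a * x$b \<partial>mu))"
    by (rule int_dsum) (rule sm_int[OF sets cov])
  also have "\<dots> = v \<bullet> (second_moment mu *v v)"
    by (simp add: second_moment_def inner_vec_def matrix_vector_mult_def sum_distrib_left mult_ac)
  finally show ?thesis by simp
qed

lemma sm_psd:
  fixes mu :: "(real^'d) measure"
  assumes sets: "sets mu = sets borel" and cov: "integrable mu (\<lambda>x. norm x ^ 2)"
  shows "\<forall>v. 0 \<le> v \<bullet> (second_moment mu *v v)"
  using sm_quad[OF sets cov] by (simp add: integral_nonneg_AE)

lemma sm_inv:
  fixes mu :: "(real^'d) measure"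
  assumes sets: "sets mu = sets borel" and cov: "integrable mu (\<lambda>x. norm x ^ 2)"
    and inv: "distr mu borel (\<lambda>x. Q *v x) = mu"
  shows "Q ** second_moment mu ** transpose Q = second_moment mu"
proof -
  have "(second_moment mu) $ i $ j = (Q ** second_moment mu ** transpose Q) $ i $ j" for i j
  proof -
    have Qm: "(\<lambda>x. Q *v x) \<in> measurable mu borel" by (rule meas_borel[OF sets]) (intro continuous_intros)
    have "(second_moment mu) $ i $ j = (\<integral>x. x$i * x$j \<partial>mu)" by (simp add: second_moment_def)
    also have "\<dots> = (\<integral>x. x$i * x$j \<partial>(distr mu borel (\<lambda>x. Q *v x)))" by (simp add: inv)
    also have "\<dots> = (\<integral>x. (Q *v x)$i * (Q *v x)$j \<partial>mu)"
      by (rule integral_distr[OF Qm]) (intro borel_measurable_continuous_onI continuous_intros)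
    also have "\<dots> = (\<integral>x. (\<Sum>a\<in>UNIV. \<Sum>b\<in>UNIV. (Q$i$a * Q$j$b) * (x$a * x$b)) \<partial>mu)"
      by (simp add: matrix_vector_mult_def sum_product mult_ac)
    also have "\<dots> = (\<Sum>a\<in>UNIV. \<Sum>b\<in>UNIV. (Q$i$a * Q$j$b) * (\<integral>x. x$a * x$b \<partial>mu))"
      by (rule int_dsum) (rule sm_int[OF sets cov])
    also have "\<dots> = (\<Sum>a\<in>UNIV. \<Sum>b\<in>UNIV. (Q$i$a * Q$j$b) * (second_moment mu)$a$b)"
      by (simp add: second_moment_def)
    also have "\<dots> = (Q ** second_moment mu ** transpose Q) $ i $ j"
      by (simp add: matrix_matrix_mult_def transpose_def sum_distrib_left mult_ac) (rule sum.swap)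
    finally show ?thesis .
  qed
  then show ?thesis by (simp add: vec_eq_iff)
qed


definition bf :: "real^'d^'d \<Rightarrow> real^'d^'k \<Rightarrow> real^'d^'k \<Rightarrow> real" where
  "bf S A B = (\<Sum>i\<in>UNIV. \<Sum>j\<in>UNIV. \<Sum>l\<in>UNIV. A$i$j * B$i$l * S$j$l)"

lemma bf_trace: "bf S A B = trace (A ** S ** transpose B)"
  by (simp add: bf_def trace_def matrix_matrix_mult_def transpose_def sum_distrib_left mult_ac)
     (rule sum.cong[OF refl], rule sum.swap)

lemma bf_sym: "transpose S = S \<Longrightarrow> bf S A B = bf S B A"
proof -
  assume s: "transpose S = S"
  have Sjl: "S$j$l = S$l$j" for j l using s by (metis transpose_def vec_lambda_beta)
  have "bf S A B = (\<Sum>i\<in>UNIV. \<Sum>l\<in>UNIV. \<Sum>j\<in>UNIV. A$i$j * B$i$l * S$j$l)"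
    unfolding bf_def by (rule sum.cong[OF refl]) (rule sum.swap)
  also have "\<dots> = bf S B A" unfolding bf_def by (simp add: Sjl mult_ac)
  finally show ?thesis .
qed

lemma bf_diff1: "bf S (A - B) C = bf S A C - bf S B C"
  by (simp add: bf_def left_diff_distrib sum_subtractf)

lemma bf_diff2: "bf S A (B - C) = bf S A B - bf S A C"
  by (simp add: bf_def left_diff_distrib right_diff_distrib sum_subtractf)

lemma bf_diff: "bf S (A - B) (A - B) = bf S A A - bf S A B - bf S B A + bf S B B"
  by (simp add: bf_diff1 bf_diff2)

lemma trace_conj:
  fixes P :: "real^'k^'k" and Y :: "real^'k^'k"
  assumes "transpose P ** P = mat 1"
  shows "trace (P ** Y ** transpose P) = trace Y"
proof -
  have "trace (P ** Y ** transpose P) = trace (P ** (Y ** transpose P))" by (simp add: matrix_mul_assoc)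
  also have "\<dots> = trace ((Y ** transpose P) ** P)" by (rule trace_mul_sym)
  also have "\<dots> = trace Y" using assms by (simp add: matrix_mul_assoc[symmetric])
  finally show ?thesis .
qed

lemma bf_invariant:
  fixes P :: "real^'k^'k" and Q S :: "real^'d^'d" and A :: "real^'d^'k"
  assumes P: "transpose P ** P = mat 1" and Q: "Q ** S ** transpose Q = S"
  shows "bf S (P ** A ** Q) (P ** A ** Q) = bf S A A"
proof -
  have "P ** A ** Q ** S ** transpose (P ** A ** Q) = P ** (A ** (Q ** S ** transpose Q) ** transpose A) ** transpose P"
    by (simp add: matrix_transpose_mul matrix_mul_assoc)
  also have "\<dots> = P ** (A ** S ** transpose A) ** transpose P" using Q by simp
  finally show ?thesis unfolding bf_trace using trace_conj[OF P] by simp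
qed

lemma bf_equiv:
  fixes P :: "real^'k^'k" and Q S :: "real^'d^'d" and A B :: "real^'d^'k"
  assumes QS: "Q ** S = S ** Q" and B: "transpose P ** B ** transpose Q = B"
  shows "bf S (P ** A ** Q) B = bf S A B"
proof -
  have "trace (P ** A ** Q ** S ** transpose B) = trace (P ** (A ** Q ** S ** transpose B))"
    by (simp add: matrix_mul_assoc)
  also have "\<dots> = trace ((A ** Q ** S ** transpose B) ** P)" by (rule trace_mul_sym)
  also have "A ** Q ** S ** transpose B ** P = A ** (Q ** S) ** transpose B ** P" by (simp add: matrix_mul_assoc)
  also have "\<dots> = A ** (S ** Q) ** transpose B ** P" using QS by simp
  also have "\<dots> = A ** S ** transpose (transpose P ** B ** transpose Q)"
    by (simp add: matrix_transpose_mul matrix_mul_assoc)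
  also have "\<dots> = A ** S ** transpose B" using B by simp
  finally show ?thesis unfolding bf_trace .
qed

lemma frob_sq: "(frob_norm A)^2 = trace (A ** transpose A)"
proof -
  have "0 \<le> (\<Sum>i\<in>UNIV. \<Sum>j\<in>UNIV. (A $ i $ j)^2)" by (intro sum_nonneg) simp
  then show ?thesis
    by (simp add: frob_norm_def trace_def matrix_matrix_mult_def transpose_def power2_eq_square)
qed

lemma frob_R:
  fixes R S :: "real^'d^'d" and A :: "real^'d^'k"
  assumes "transpose R = R" "R ** R = S"
  shows "(frob_norm (A ** R))^2 = bf S A A"
proof -
  have "A ** R ** transpose (A ** R) = A ** (R ** R) ** transpose A"
    using assms(1) by (simp add: matrix_transpose_mul matrix_mul_assoc)
  then show ?thesis unfolding frob_sq bf_trace using assms(2) by simp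
qed

lemma frob_submult:
  fixes A :: "real^'d^'k" and B :: "real^'m^'d"
  shows "(frob_norm (A ** B))^2 \<le> (frob_norm B)^2 * (frob_norm A)^2"
proof -
  have sq: "(frob_norm X)^2 = (\<Sum>i\<in>UNIV. \<Sum>j\<in>UNIV. (X $ i $ j)^2)" for X :: "real^'b^'a"
  proof -
    have "0 \<le> (\<Sum>i\<in>UNIV. \<Sum>j\<in>UNIV. (X $ i $ j)^2)" by (intro sum_nonneg) simp
    then show ?thesis by (simp add: frob_norm_def)
  qed
  define col where "col m = (\<chi> j. B$j$m)" for m
  have "(frob_norm (A ** B))^2 = (\<Sum>i\<in>UNIV. \<Sum>m\<in>UNIV. (A$i \<bullet> col m)^2)"
    by (simp add: sq matrix_matrix_mult_def inner_vec_def col_def)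
  also have "\<dots> \<le> (\<Sum>i\<in>UNIV. \<Sum>m\<in>UNIV. (A$i \<bullet> A$i) * (col m \<bullet> col m))"
    by (intro sum_mono Cauchy_Schwarz_ineq)
  also have "\<dots> = (\<Sum>i\<in>UNIV. A$i \<bullet> A$i) * (\<Sum>m\<in>UNIV. col m \<bullet> col m)"
    by (simp add: sum_product)
  also have "\<dots> = (\<Sum>i\<in>UNIV. \<Sum>j\<in>UNIV. (A$i$j)^2) * (\<Sum>m\<in>UNIV. \<Sum>j\<in>UNIV. (B$j$m)^2)"
    by (simp add: inner_vec_def col_def power2_eq_square)
  also have "(\<Sum>m\<in>UNIV. \<Sum>j\<in>UNIV. (B$j$m)^2) = (\<Sum>j\<in>UNIV. \<Sum>m\<in>UNIV. (B$j$m)^2)"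
    by (rule sum.swap)
  also have "(\<Sum>i\<in>UNIV. \<Sum>j\<in>UNIV. (A$i$j)^2) * (\<Sum>j\<in>UNIV. \<Sum>m\<in>UNIV. (B$j$m)^2) = (frob_norm B)^2 * (frob_norm A)^2"
    unfolding sq by (rule mult.commute)
  finally show ?thesis .
qed

lemma madd_r: "(X + Y) ** (B::real^'p^'n) = X ** B + (Y::real^'n^'m) ** B"
  by (simp add: matrix_matrix_mult_def vec_eq_iff sum.distrib distrib_right)

lemma bl_mm: "bounded_linear (\<lambda>X::real^'n^'m. A ** X ** (B::real^'p^'n))"
proof -
  have "linear (\<lambda>X::real^'n^'m. A ** X ** B)"
  proof (rule linearI)
    show "A ** (X + Y) ** B = A ** X ** B + A ** Y ** B" for X Y :: "real^'n^'m"
      by (simp add: matrix_add_ldistrib madd_r)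
    show "A ** (c *\<^sub>R X) ** B = c *\<^sub>R (A ** X ** B)" for c and X :: "real^'n^'m"
      by (simp add: matrix_scalar_ac scalar_matrix_assoc)
  qed
  then show ?thesis by (simp add: linear_conv_bounded_linear)
qed

lemma bl_bf: "bounded_linear (\<lambda>B. bf S A B)"
proof -
  have "linear (\<lambda>B. bf S A B)"
  proof (rule linearI)
    show "bf S A (B + C) = bf S A B + bf S A C" for B C
      by (simp add: bf_def algebra_simps sum.distrib)
    show "bf S A (c *\<^sub>R B) = c *\<^sub>R bf S A B" for c B
      by (simp add: bf_def sum_distrib_left mult_ac)
  qed
  then show ?thesis by (simp add: linear_conv_bounded_linear)
qed

lemma int_tsum:
  fixes F :: "'i \<Rightarrow> 'j \<Rightarrow> 'l \<Rightarrow> 'a \<Rightarrow> real"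
  assumes "\<And>i j l. integrable M (F i j l)"
  shows "(\<integral>x. (\<Sum>i\<in>I. \<Sum>j\<in>J. \<Sum>l\<in>L. F i j l x * c i j l) \<partial>M)
       = (\<Sum>i\<in>I. \<Sum>j\<in>J. \<Sum>l\<in>L. integral\<^sup>L M (F i j l) * c i j l)"
  using assms by (simp add: Bochner_Integration.integral_sum integrable_sum)

context prop_setting begin

lemma Wg_int: "integrable lam (\<lambda>g. psi (inv\<^bsub>G\<^esub> g) ** W ** phi g)"
  by (rule H_int[where H="\<lambda>P Q. P ** W ** Q"]) (intro continuous_intros)

lemma Wg_meas: "(\<lambda>g. psi (inv\<^bsub>G\<^esub> g) ** W ** phi g) \<in> borel_measurable lam"
  by (rule H_meas[where H="\<lambda>P Q. P ** W ** Q"]) (intro continuous_intros)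

lemma Psi_equiv:
  assumes h: "h \<in> carrier G"
  shows "psi h ** Psi_op G lam phi psi W ** transpose (phi h) = Psi_op G lam phi psi W"
proof -
  define F where "F = (\<lambda>g. psi (inv\<^bsub>G\<^esub> g) ** W ** phi g)"
  have ih: "inv\<^bsub>G\<^esub> h \<in> carrier G" using h by simp
  have "psi h ** Psi_op G lam phi psi W ** transpose (phi h) = psi h ** integral\<^sup>L lam F ** transpose (phi h)"
    by (simp add: Psi_op_def F_def)
  also have "\<dots> = (\<integral>g. psi h ** F g ** transpose (phi h) \<partial>lam)"
    by (rule integral_bounded_linear[OF bl_mm, symmetric]) (simp add: F_def Wg_int)
  also have "\<dots> = (\<integral>g. F (g \<otimes>\<^bsub>G\<^esub> inv\<^bsub>G\<^esub> h) \<partial>lam)"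
  proof (rule Bochner_Integration.integral_cong[OF refl])
    fix g assume "g \<in> space lam"
    then have g: "g \<in> carrier G" using space_lam by simp
    have "inv\<^bsub>G\<^esub> (g \<otimes>\<^bsub>G\<^esub> inv\<^bsub>G\<^esub> h) = h \<otimes>\<^bsub>G\<^esub> inv\<^bsub>G\<^esub> g"
      using g h by (simp add: grp.inv_mult_group)
    then have "F (g \<otimes>\<^bsub>G\<^esub> inv\<^bsub>G\<^esub> h) = psi (h \<otimes>\<^bsub>G\<^esub> inv\<^bsub>G\<^esub> g) ** W ** phi (g \<otimes>\<^bsub>G\<^esub> inv\<^bsub>G\<^esub> h)"
      by (simp add: F_def)
    also have "\<dots> = psi h ** psi (inv\<^bsub>G\<^esub> g) ** W ** (phi g ** transpose (phi h))"
      using g h by (simp add: psi_mult phi_mult phi_inv)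
    finally show "psi h ** F g ** transpose (phi h) = F (g \<otimes>\<^bsub>G\<^esub> inv\<^bsub>G\<^esub> h)"
      by (simp add: F_def matrix_mul_assoc)
  qed
  also have "\<dots> = integral\<^sup>L lam F"
    by (rule integral_right[OF ih]) (simp add: F_def Wg_meas)
  also have "\<dots> = Psi_op G lam phi psi W" by (simp add: Psi_op_def F_def)
  finally show ?thesis .
qed

end


locale main_setting = prop_setting G T lam phi psi
  for G :: "('g, 'b) monoid_scheme" and T :: "'g topology" and lam :: "'g measure"
    and phi :: "'g \<Rightarrow> real^'d^'d" and psi :: "'g \<Rightarrow> real^'k^'k" +
  fixes sg :: "real \<Rightarrow> real" and C :: real and W :: "real^'d^'k" and mu :: "(real^'d) measure"
  assumes lip: "\<forall>a b. \<bar>sg a - sg b\<bar> \<le> C * \<bar>a - b\<bar>"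
    and equiv: "\<forall>g\<in>carrier G. \<forall>v. elementwise sg (psi g *v v) = psi g *v elementwise sg v"
    and mu_prob: "prob_space mu" and mu_sets: "sets mu = sets borel"
    and mu_inv: "\<forall>g\<in>carrier G. distr mu borel (\<lambda>x. phi g *v x) = mu"
    and cov: "integrable mu (\<lambda>x. norm x ^ 2)"
begin

abbreviation "Sg \<equiv> second_moment mu"
abbreviation "PW \<equiv> Psi_op G lam phi psi W"
definition "Ng g = W - psi (inv\<^bsub>G\<^esub> g) ** W ** phi g"
definition "Mc i j l = (\<integral>g. (Ng g)$i$j * (Ng g)$i$l \<partial>lam)"
definition "Px x = C^2 * (\<Sum>i\<in>UNIV. \<Sum>j\<in>UNIV. \<Sum>l\<in>UNIV. Mc i j l * (x$j * x$l))"
definition "ff x = elementwise sg (W *v x)"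

lemma bfS: "bf Sg A B = bf Sg B A" by (rule bf_sym[OF sm_sym])

lemma C0: "0 \<le> C" by (rule C_nonneg[OF lip])
lemma sg_cont: "continuous_on UNIV sg" by (rule sigma_cont[OF lip])

lemma Sg_inv: "g \<in> carrier G \<Longrightarrow> phi g ** Sg ** transpose (phi g) = Sg"
  using sm_inv[OF mu_sets cov] mu_inv by blast

lemma Sg_comm: assumes g: "g \<in> carrier G" shows "phi g ** Sg = Sg ** phi g"
proof -
  have o: "transpose (phi g) ** phi g = mat 1" using phi_orth[OF g] by (simp add: orthogonal_matrix_def)
  have "Sg ** phi g = (phi g ** Sg ** transpose (phi g)) ** phi g" using Sg_inv[OF g] by simp
  also have "\<dots> = phi g ** Sg ** (transpose (phi g) ** phi g)" by (simp add: matrix_mul_assoc)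
  also have "\<dots> = phi g ** Sg" using o by simp
  finally show ?thesis by simp
qed

lemma psi_inv_orth: assumes g: "g \<in> carrier G"
  shows "transpose (psi (inv\<^bsub>G\<^esub> g)) ** psi (inv\<^bsub>G\<^esub> g) = mat 1"
  using psi_orth[OF inv_car[OF g]] by (simp add: orthogonal_matrix_def)

lemma bf_Wg_Wg: assumes g: "g \<in> carrier G"
  shows "bf Sg (psi (inv\<^bsub>G\<^esub> g) ** W ** phi g) (psi (inv\<^bsub>G\<^esub> g) ** W ** phi g) = bf Sg W W"
  by (rule bf_invariant[OF psi_inv_orth[OF g] Sg_inv[OF g]])

lemma bf_Wg_PW: assumes g: "g \<in> carrier G"
  shows "bf Sg (psi (inv\<^bsub>G\<^esub> g) ** W ** phi g) PW = bf Sg W PW"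
proof (rule bf_equiv[OF Sg_comm[OF g]])
  show "transpose (psi (inv\<^bsub>G\<^esub> g)) ** PW ** transpose (phi g) = PW"
    using Psi_equiv[OF g] g by (simp add: psi_inv)
qed

lemma int_bf_W: "(\<integral>g. bf Sg A (psi (inv\<^bsub>G\<^esub> g) ** W ** phi g) \<partial>lam) = bf Sg A PW"
  unfolding Psi_op_def by (rule integral_bounded_linear[OF bl_bf Wg_int])

lemma bf_PW_PW: "bf Sg PW PW = bf Sg W PW"
proof -
  have "bf Sg PW PW = (\<integral>g. bf Sg PW (psi (inv\<^bsub>G\<^esub> g) ** W ** phi g) \<partial>lam)"
    by (rule int_bf_W[symmetric])
  also have "\<dots> = (\<integral>g. bf Sg W PW \<partial>lam)"
  proof (rule Bochner_Integration.integral_cong[OF refl])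
    fix g assume "g \<in> space lam"
    then have g: "g \<in> carrier G" using space_lam by simp
    show "bf Sg PW (psi (inv\<^bsub>G\<^esub> g) ** W ** phi g) = bf Sg W PW"
      using bfS bf_Wg_PW[OF g] by metis
  qed
  also have "\<dots> = bf Sg W PW" using P.prob_space by simp
  finally show ?thesis .
qed

lemma claimC: "(\<integral>g. bf Sg (Ng g) (Ng g) \<partial>lam) = 2 * bf Sg (W - PW) (W - PW)"
proof -
  have i1: "integrable lam (\<lambda>g. bf Sg W (psi (inv\<^bsub>G\<^esub> g) ** W ** phi g))"
    by (rule H_int[where H="\<lambda>P Q. bf Sg W (P ** W ** Q)"]) (unfold bf_def, intro continuous_intros)
  have "(\<integral>g. bf Sg (Ng g) (Ng g) \<partial>lam) = (\<integral>g. 2 * bf Sg W W - 2 * bf Sg W (psi (inv\<^bsub>G\<^esub> g) ** W ** phi g) \<partial>lam)"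
  proof (rule Bochner_Integration.integral_cong[OF refl])
    fix g assume "g \<in> space lam"
    then have g: "g \<in> carrier G" using space_lam by simp
    have s: "bf Sg (psi (inv\<^bsub>G\<^esub> g) ** W ** phi g) W = bf Sg W (psi (inv\<^bsub>G\<^esub> g) ** W ** phi g)"
      by (rule bfS)
    show "bf Sg (Ng g) (Ng g) = 2 * bf Sg W W - 2 * bf Sg W (psi (inv\<^bsub>G\<^esub> g) ** W ** phi g)"
      unfolding Ng_def bf_diff s bf_Wg_Wg[OF g] by simp
  qed
  also have "\<dots> = 2 * bf Sg W W - 2 * bf Sg W PW"
    using i1 P.prob_space by (simp add: int_bf_W)
  also have "\<dots> = 2 * bf Sg (W - PW) (W - PW)"
    unfolding bf_diff bf_PW_PW using bfS[of PW W] by simp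
  finally show ?thesis .
qed


lemma Nint: "integrable lam (\<lambda>g. (Ng g)$i$j * (Ng g)$i$l)"
  unfolding Ng_def
  by (rule H_int[where H="\<lambda>P Q. (W - P ** W ** Q)$i$j * (W - P ** W ** Q)$i$l"]) (intro continuous_intros)

lemma claimA: "(norm (ff x - Qop G lam phi psi ff x))^2 \<le> Px x"
proof -
  define h where "h = (\<lambda>g. psi (inv\<^bsub>G\<^esub> g) *v ff (phi g *v x))"
  have hint: "integrable lam h" unfolding h_def ff_def
    by (rule H_int[where H="\<lambda>P Q. P *v elementwise sg (W *v (Q *v x))"]) (intro continuous_intros sg_cont)
  define k where "k = (\<lambda>g. ff x - h g)"
  have kint: "integrable lam k" unfolding k_def using hint by simp
  have k2int: "integrable lam (\<lambda>g. (norm (k g))^2)" unfolding k_def h_def ff_def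
    by (rule H_int[where H="\<lambda>P Q. (norm (elementwise sg (W *v x) - P *v elementwise sg (W *v (Q *v x))))^2"])
       (intro continuous_intros sg_cont)
  have rint: "integrable lam (\<lambda>g. C^2 * (norm (Ng g *v x))^2)" unfolding Ng_def
    by (rule H_int[where H="\<lambda>P Q. C^2 * (norm ((W - P ** W ** Q) *v x))^2"]) (intro continuous_intros)
  have eq: "ff x - Qop G lam phi psi ff x = integral\<^sup>L lam k"
  proof -
    have "integral\<^sup>L lam k = integral\<^sup>L lam (\<lambda>g. ff x) - integral\<^sup>L lam h"
      unfolding k_def using hint by (intro Bochner_Integration.integral_diff) auto
    also have "integral\<^sup>L lam (\<lambda>g. ff x) = ff x" using P.prob_space by simp
    finally show ?thesis by (simp add: Qop_def h_def)
  qed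
  have "(norm (ff x - Qop G lam phi psi ff x))^2 \<le> integral\<^sup>L lam (\<lambda>g. (norm (k g))^2)"
    unfolding eq by (rule jensen_norm[OF prob kint k2int])
  also have "\<dots> \<le> integral\<^sup>L lam (\<lambda>g. C^2 * (norm (Ng g *v x))^2)"
  proof (rule integral_mono[OF k2int rint])
    fix g assume "g \<in> space lam"
    then have g: "g \<in> carrier G" using space_lam by simp
    have "h g = psi (inv\<^bsub>G\<^esub> g) *v elementwise sg (W *v (phi g *v x))" by (simp add: h_def ff_def)
    also have "\<dots> = elementwise sg (psi (inv\<^bsub>G\<^esub> g) *v (W *v (phi g *v x)))"
      using equiv inv_car[OF g] by simp
    also have "psi (inv\<^bsub>G\<^esub> g) *v (W *v (phi g *v x)) = (psi (inv\<^bsub>G\<^esub> g) ** W ** phi g) *v x"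
      by (simp add: matrix_vector_mul_assoc matrix_mul_assoc)
    finally have hg: "h g = elementwise sg ((psi (inv\<^bsub>G\<^esub> g) ** W ** phi g) *v x)" .
    have "norm (k g) \<le> C * norm (W *v x - (psi (inv\<^bsub>G\<^esub> g) ** W ** phi g) *v x)"
      unfolding k_def hg ff_def by (rule elementwise_lip[OF lip])
    also have "W *v x - (psi (inv\<^bsub>G\<^esub> g) ** W ** phi g) *v x = Ng g *v x"
      by (simp add: Ng_def matrix_vector_mult_diff_rdistrib)
    finally have "norm (k g) \<le> C * norm (Ng g *v x)" .
    then have "(norm (k g))^2 \<le> (C * norm (Ng g *v x))^2" by (rule power_mono) simp
    then show "(norm (k g))^2 \<le> C^2 * (norm (Ng g *v x))^2" by (simp add: power_mult_distrib)
  qed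
  also have "\<dots> = Px x"
  proof -
    have "integral\<^sup>L lam (\<lambda>g. C^2 * (norm (Ng g *v x))^2)
        = C^2 * integral\<^sup>L lam (\<lambda>g. \<Sum>i\<in>UNIV. \<Sum>j\<in>UNIV. \<Sum>l\<in>UNIV. ((Ng g)$i$j * (Ng g)$i$l) * (x$j * x$l))"
      by (simp add: norm_mv_sq)
    also have "integral\<^sup>L lam (\<lambda>g. \<Sum>i\<in>UNIV. \<Sum>j\<in>UNIV. \<Sum>l\<in>UNIV. ((Ng g)$i$j * (Ng g)$i$l) * (x$j * x$l))
        = (\<Sum>i\<in>UNIV. \<Sum>j\<in>UNIV. \<Sum>l\<in>UNIV. Mc i j l * (x$j * x$l))"
      unfolding Mc_def by (rule int_tsum[where F="\<lambda>i j l g. (Ng g)$i$j * (Ng g)$i$l"]) (rule Nint)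
    finally show ?thesis by (simp add: Px_def)
  qed
  finally show ?thesis .
qed

lemma Px_int: "integrable mu Px"
proof -
  have "integrable mu (\<lambda>x. (\<Sum>i\<in>UNIV. \<Sum>j\<in>UNIV. \<Sum>l\<in>UNIV. Mc i j l * (x$j * x$l)))"
    using sm_int[OF mu_sets cov] by (simp add: integrable_sum)
  then show ?thesis unfolding Px_def by (rule integrable_mult_right)
qed

lemma claimB: "integral\<^sup>L mu Px = C^2 * (\<integral>g. bf Sg (Ng g) (Ng g) \<partial>lam)"
proof -
  have "integral\<^sup>L mu Px = C^2 * (\<integral>x. (\<Sum>i\<in>UNIV. \<Sum>j\<in>UNIV. \<Sum>l\<in>UNIV. (x$j * x$l) * Mc i j l) \<partial>mu)"
    unfolding Px_def by (simp add: mult.commute)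
  also have "(\<integral>x. (\<Sum>i\<in>UNIV. \<Sum>j\<in>UNIV. \<Sum>l\<in>UNIV. (x$j * x$l) * Mc i j l) \<partial>mu)
      = (\<Sum>i\<in>UNIV. \<Sum>j\<in>UNIV. \<Sum>l\<in>UNIV. (\<integral>x. x$j * x$l \<partial>mu) * Mc i j l)"
    by (rule int_tsum[where F="\<lambda>i j l x. x$j * x$l"]) (rule sm_int[OF mu_sets cov])
  also have "\<dots> = (\<Sum>i\<in>UNIV. \<Sum>j\<in>UNIV. \<Sum>l\<in>UNIV. Mc i j l * Sg$j$l)"
    by (simp add: second_moment_def mult.commute)
  also have "\<dots> = (\<integral>g. bf Sg (Ng g) (Ng g) \<partial>lam)"
    unfolding bf_def Mc_def
    by (rule int_tsum[where F="\<lambda>i j l g. (Ng g)$i$j * (Ng g)$i$l", symmetric]) (rule Nint)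
  finally show ?thesis .
qed

lemma main_ineq:
  "(\<integral>\<^sup>+ x. ennreal ((norm (ff x - Qop G lam phi psi ff x))^2) \<partial>mu)
     \<le> ennreal (2 * C^2 * bf Sg (W - PW) (W - PW))"
proof -
  have "(\<integral>\<^sup>+ x. ennreal ((norm (ff x - Qop G lam phi psi ff x))^2) \<partial>mu) \<le> (\<integral>\<^sup>+ x. ennreal (Px x) \<partial>mu)"
    by (intro nn_integral_mono ennreal_leI claimA)
  also have "\<dots> = ennreal (integral\<^sup>L mu Px)"
  proof (rule nn_integral_eq_integral[OF Px_int])
    show "AE x in mu. 0 \<le> Px x"
    proof (rule AE_I2)
      fix x
      have "0 \<le> (norm (ff x - Qop G lam phi psi ff x))^2" by simp
      also have "\<dots> \<le> Px x" by (rule claimA)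
      finally show "0 \<le> Px x" .
    qed
  qed
  also have "integral\<^sup>L mu Px = 2 * C^2 * bf Sg (W - PW) (W - PW)"
    unfolding claimB claimC by simp
  finally show ?thesis .
qed

end


theorem proposition7p3:
  fixes G :: "('g, 'b) monoid_scheme" and T :: "'g topology" and lam :: "'g measure"
    and phi :: "'g \<Rightarrow> real^'d^'d" and psi :: "'g \<Rightarrow> real^'k^'k"
    and sigma :: "real \<Rightarrow> real" and C :: real
    and W :: "real^'d^'k" and mu :: "(real^'d) measure"
  assumes grp: "compact_top_group G T"
    and haar: "haar_prob G T lam"
    and rep_phi: "orth_rep G lam phi"
    and rep_psi: "orth_rep G lam psi"
    and lip: "\<forall>a b. \<bar>sigma a - sigma b\<bar> \<le> C * \<bar>a - b\<bar>"
    and equiv: "\<forall>g\<in>carrier G. \<forall>v. elementwise sigma (psi g *v v) = psi g *v elementwise sigma v"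
    and mu_prob: "prob_space mu" and mu_sets: "sets mu = sets borel"
    and mu_inv: "\<forall>g\<in>carrier G. distr mu borel (\<lambda>x. phi g *v x) = mu"
    and cov: "integrable mu (\<lambda>x. norm x ^ 2)"
    and L2: "(\<lambda>x. elementwise sigma (W *v x)) \<in> borel_measurable mu"
            "integrable mu (\<lambda>x. norm (elementwise sigma (W *v x)) ^ 2)"
  shows "(let f = (\<lambda>x. elementwise sigma (W *v x));
              Wp = W - Psi_op G lam phi psi W;
              R = psd_sqrt (second_moment mu)
          in (\<integral>\<^sup>+ x. ennreal ((norm (f x - Qop G lam phi psi f x))^2) \<partial>mu)
               \<le> ennreal (2 * C^2 * (frob_norm (Wp ** R))^2)
             \<and> 2 * C^2 * (frob_norm (Wp ** R))^2 \<le> 2 * C^2 * (frob_norm R)^2 * (frob_norm Wp)^2)"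
proof -
  interpret M: main_setting G T lam phi psi sigma C W mu
    by (rule main_setting.intro, rule prop_setting.intro, rule haar_setting.intro[OF grp haar],
        rule prop_setting_axioms.intro[OF rep_phi rep_psi],
        rule main_setting_axioms.intro[OF lip equiv mu_prob mu_sets mu_inv cov])
  have R: "transpose (psd_sqrt (second_moment mu)) = psd_sqrt (second_moment mu)"
     "psd_sqrt (second_moment mu) ** psd_sqrt (second_moment mu) = second_moment mu"
    using psd_sqrt_props[OF sm_sym sm_psd[OF mu_sets cov]] by auto
  have ffeq: "M.ff = (\<lambda>x. elementwise sigma (W *v x))" by (simp add: fun_eq_iff M.ff_def)
  have fr: "(frob_norm ((W - Psi_op G lam phi psi W) ** psd_sqrt (second_moment mu)))^2
      = bf (second_moment mu) (W - Psi_op G lam phi psi W) (W - Psi_op G lam phi psi W)"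
    by (rule frob_R[OF R])
  have C2: "0 \<le> 2 * C^2" by simp
  show ?thesis unfolding Let_def
  proof
    show "(\<integral>\<^sup>+ x. ennreal ((norm (elementwise sigma (W *v x) - Qop G lam phi psi (\<lambda>x. elementwise sigma (W *v x)) x))^2) \<partial>mu)
        \<le> ennreal (2 * C^2 * (frob_norm ((W - Psi_op G lam phi psi W) ** psd_sqrt (second_moment mu)))^2)"
      using M.main_ineq unfolding ffeq fr by simp
    have "(frob_norm ((W - Psi_op G lam phi psi W) ** psd_sqrt (second_moment mu)))^2
        \<le> (frob_norm (psd_sqrt (second_moment mu)))^2 * (frob_norm (W - Psi_op G lam phi psi W))^2"
      by (rule frob_submult)
    from mult_left_mono[OF this C2]
    show "2 * C^2 * (frob_norm ((W - Psi_op G lam phi psi W) ** psd_sqrt (second_moment mu)))^2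
        \<le> 2 * C^2 * (frob_norm (psd_sqrt (second_moment mu)))^2 * (frob_norm (W - Psi_op G lam phi psi W))^2"
      by (simp add: mult_ac)
  qed
qed

end
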